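(* Let $I$ be an index set and $p_r,q_r\in\mathbb R\setminus\{0\}$ for $r\in I$. There exists a homeomorphism $f\colon\mathbb R\to\mathbb R$ with $f(p_rx)=q_rf(x)$ for all $x\in\mathbb R$, $r\in I$, if and only if there exists a real number $\alpha>-1$ such that $q_r=p_r|p_r|^{\alpha}$ for all $r\in I$. *)

theory Defs
  imports "HOL-Analysis.Analysis"
begin

end

theory Submission
  imports Defs
begin

lemma ratio_le:
  fixes a a' b b' :: real
  assumes pos: "a > 0" "a' > 0" "b > 0" "b' > 0"
    and H: "\<And>(m::nat) (n::nat). m * a \<le> n * a' \<Longrightarrow> m * b \<le> n * b'"
  shows "b / a \<le> b' / a'"
proof (rule ccontr)
  assume "\<not> ?thesis"
  hence lt: "a * b' < a' * b" using pos by (simp add: field_simps)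
  obtain N :: nat where N: "a * b / (a' * b - a * b') < N"
    using reals_Archimedean2 by blast
  define m where "m = nat (floor (N * a' / a))"
  have fl: "N * a' / a - 1 < m" "m \<le> N * a' / a"
  proof -
    have "0 \<le> N * a' / a" using pos by simp
    hence "0 \<le> floor (N * a' / a)" by simp
    hence e: "real m = of_int (floor (N * a' / a))" unfolding m_def by simp
    show "N * a' / a - 1 < m" "m \<le> N * a' / a" unfolding e by linarith+
  qed
  have "m * a \<le> N * a'" using fl(2) pos by (simp add: field_simps)
  hence "m * b \<le> N * b'" by (rule H)
  moreover have "(N * a' / a - 1) * b < m * b" using fl(1) pos by simp
  ultimately have "(N * a' / a - 1) * b < N * b'" by linarith
  hence "N * a' * b - a * b < N * b' * a" using pos by (simp add: field_simps)
  hence "N * (a' * b - a * b') < a * b" by (simp add: algebra_simps)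
  moreover have "a * b < N * (a' * b - a * b')" using N lt by (simp add: field_simps)
  ultimately show False by linarith
qed

lemma compare_AB:
  fixes f :: "real \<Rightarrow> real"
  assumes mono: "\<And>x y. x < y \<Longrightarrow> f x < f y" and c: "c > 0"
    and A: "A > 1" "B > 1" "\<And>m::nat. f (A ^ m) = B ^ m * c"
    and A': "A' > 1" "B' > 1" "\<And>m::nat. f (A' ^ m) = B' ^ m * c"
  shows "ln B / ln A \<le> ln B' / ln A'"
proof -
  have H: "real m * ln B \<le> real n * ln B'" if h: "real m * ln A \<le> real n * ln A'" for m n :: nat
  proof -
    have "A ^ m = exp (m * ln A)" using A by (simp add: exp_of_nat_mult)
    also have "\<dots> \<le> exp (n * ln A')" using h by simp
    also have "\<dots> = A' ^ n" using A' by (simp add: exp_of_nat_mult)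
    finally have "A ^ m \<le> A' ^ n" .
    hence "f (A ^ m) \<le> f (A' ^ n)" using mono by (metis order_le_less)
    hence "B ^ m * c \<le> B' ^ n * c" using A A' by simp
    hence "B ^ m \<le> B' ^ n" using c by simp
    hence "ln (B ^ m) \<le> ln (B' ^ n)" using A A' by simp
    thus ?thesis using A A' by (simp add: ln_realpow)
  qed
  show ?thesis by (rule ratio_le[OF _ _ _ _ H]) (use A A' in simp_all)
qed

lemma core:
  fixes f :: "real \<Rightarrow> real" and I :: "'i set" and p q :: "'i \<Rightarrow> real"
  assumes mono: "\<And>x y. x < y \<Longrightarrow> f x < f y"
    and eq: "\<forall>r\<in>I. \<forall>x. f (p r * x) = q r * f x"
    and pnz: "\<forall>r\<in>I. p r \<noteq> 0" and qnz: "\<forall>r\<in>I. q r \<noteq> 0"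
  shows "\<exists>\<alpha>::real. \<alpha> > -1 \<and> (\<forall>r\<in>I. q r = p r * \<bar>p r\<bar> powr \<alpha>)"
proof -
  have inj: "x = y" if "f x = f y" for x y
    using mono that by (metis less_irrefl linorder_neqE)
  have mono': "f x \<le> f y" if "x \<le> y" for x y using mono that by (metis order_le_less)
  have eqr: "f (p r * x) = q r * f x" if "r \<in> I" for r x using eq that by blast
  show ?thesis
  proof (cases "\<forall>r\<in>I. p r = 1")
    case True
    have "q r = 1" if r: "r \<in> I" for r
    proof -
      have "f 0 = q r * f 0" "f 1 = q r * f 1" using eqr[OF r, of 0] eqr[OF r, of 1] True r by simp_all
      moreover have "f 0 \<noteq> f 1" using inj[of 0 1] by auto
      ultimately show ?thesis by (metis mult_cancel_right2)
    qed
    thus ?thesis using True by (intro exI[of _ 0]) auto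
  next
    case False
    then obtain r0 where r0: "r0 \<in> I" "p r0 \<noteq> 1" by blast
    have "q r0 \<noteq> 1"
    proof
      assume "q r0 = 1"
      hence "f (p r0) = f 1" using eqr[OF r0(1), of 1] by simp
      thus False using inj[of "p r0" 1] r0 by simp
    qed
    moreover have "f 0 = q r0 * f 0" using eqr[OF r0(1), of 0] by simp
    ultimately have f0: "f 0 = 0" by (metis mult_cancel_right2)
    have pos: "f x > 0" if "x > 0" for x using mono[OF that] f0 by simp
    have neg: "f x < 0" if "x < 0" for x using mono[OF that] f0 by simp
    define c where "c = f 1"
    have c: "c > 0" using pos c_def by simp
    have fp: "f (p r) = q r * c" if "r \<in> I" for r using eqr[OF that, of 1] c_def by simp
    have sgnq: "q r = sgn (p r) * \<bar>q r\<bar>" if r: "r \<in> I" for r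
    proof (cases "p r > 0")
      case True
      hence "q r * c > 0" using pos[OF True] fp[OF r] by simp
      hence "q r > 0" using c by (simp add: zero_less_mult_iff)
      thus ?thesis using True by simp
    next
      case False
      hence "p r < 0" using pnz r by auto
      hence "q r * c < 0" using neg[of "p r"] fp[OF r] by simp
      hence "q r < 0" using c by (simp add: mult_less_0_iff)
      thus ?thesis using \<open>p r < 0\<close> by simp
    qed
    have unit: "q r = p r" if r: "r \<in> I" and u: "\<bar>p r\<bar> = 1" for r
    proof (cases "p r = 1")
      case True
      hence "c = q r * c" using fp[OF r] unfolding c_def by simp
      thus ?thesis using c True by simp
    next
      case False
      hence m1: "p r = -1" using u by (auto simp: abs_if split: if_splits)
      have "f (-1) = q r * c" using fp[OF r] m1 by simp
      moreover have "f 1 = q r * f (-1)" using eqr[OF r, of "-1"] m1 by simp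
      ultimately have "c = q r * q r * c" using c_def by simp
      hence "q r * q r = 1" using c by simp
      hence "q r = 1 \<or> q r = -1" by (metis square_eq_1_iff power2_eq_square)
      moreover have "q r < 0"
      proof -
        have "q r = - \<bar>q r\<bar>" using sgnq[OF r] m1 by simp
        moreover have "q r \<noteq> 0" using qnz r by simp
        ultimately show ?thesis by (simp add: abs_if split: if_splits)
      qed
      ultimately show ?thesis using m1 by auto
    qed
    have iter: "f (p r ^ n * x) = q r ^ n * f x" if r: "r \<in> I" for r n x
    proof (induction n arbitrary: x)
      case 0 show ?case by simp
    next
      case (Suc n)
      have "f (p r ^ Suc n * x) = f (p r * (p r ^ n * x))" by (simp add: mult.assoc)
      also have "\<dots> = q r * f (p r ^ n * x)" using eqr[OF r] by blast
      finally show ?case using Suc by simp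
    qed
    have sq: "f (p r ^ 2 * y) = q r ^ 2 * f y" if r: "r \<in> I" for r y
      using iter[OF r, of 2 y] .
    have AB: "\<exists>A B. A > 1 \<and> B > 1 \<and> (\<forall>m::nat. f (A ^ m) = B ^ m * c)
               \<and> ln B / ln A = ln \<bar>q r\<bar> / ln \<bar>p r\<bar>"
      if r: "r \<in> I" and nu: "\<bar>p r\<bar> \<noteq> 1" for r
    proof -
      have p2: "p r ^ 2 > 0" "q r ^ 2 > 0" using pnz qnz r by simp_all
      have lnp: "ln (p r ^ 2) = 2 * ln \<bar>p r\<bar>"
      proof -
        have "p r ^ 2 = \<bar>p r\<bar> ^ 2" by simp
        moreover have "\<bar>p r\<bar> > 0" using pnz r by simp
        ultimately show ?thesis by (simp only: ln_realpow)
      qed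
      have lnq: "ln (q r ^ 2) = 2 * ln \<bar>q r\<bar>"
      proof -
        have "q r ^ 2 = \<bar>q r\<bar> ^ 2" by simp
        moreover have "\<bar>q r\<bar> > 0" using qnz r by simp
        ultimately show ?thesis by (simp only: ln_realpow)
      qed
      obtain A B where AB: "A > 0" "B > 0" "A \<noteq> 1" "\<And>y. f (A * y) = B * f y"
          "ln B / ln A = ln \<bar>q r\<bar> / ln \<bar>p r\<bar>"
      proof (cases "\<bar>p r\<bar> > 1")
        case True
        have "p r ^ 2 \<noteq> 1" using nu by (simp add: abs_square_eq_1)
        thus ?thesis using that[of "p r ^ 2" "q r ^ 2"] p2 sq[OF r] lnp lnq by simp
      next
        case False
        have ne: "p r ^ 2 \<noteq> 1" using nu by (simp add: abs_square_eq_1)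
        have step: "f (1 / p r ^ 2 * y) = 1 / q r ^ 2 * f y" for y
        proof -
          have "f (p r ^ 2 * (1 / p r ^ 2 * y)) = q r ^ 2 * f (1 / p r ^ 2 * y)" by (rule sq[OF r])
          moreover have "p r ^ 2 * (1 / p r ^ 2 * y) = y" using p2 by simp
          ultimately have "f y = q r ^ 2 * f (1 / p r ^ 2 * y)" by simp
          thus ?thesis using p2 by simp
        qed
        have "ln (1 / q r ^ 2) / ln (1 / p r ^ 2) = ln \<bar>q r\<bar> / ln \<bar>p r\<bar>"
          using p2 lnp lnq by (simp add: ln_div)
        moreover have "1 / p r ^ 2 \<noteq> 1" using ne by simp
        ultimately show ?thesis using that[of "1 / p r ^ 2" "1 / q r ^ 2"] p2 step by simp
      qed
      have fA: "f (A ^ m * y) = B ^ m * f y" for m :: nat and y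
      proof (induction m arbitrary: y)
        case 0 show ?case by simp
      next
        case (Suc m)
        have "f (A ^ Suc m * y) = f (A * (A ^ m * y))" by (simp add: mult.assoc)
        also have "\<dots> = B * f (A ^ m * y)" by (rule AB(4))
        finally show ?case using Suc by simp
      qed
      show ?thesis
      proof (cases "A > 1")
        case True
        have "f A > f 1" using mono[OF True] .
        hence "B * c > c" using AB(4)[of 1] unfolding c_def by simp
        hence "B > 1" using c by simp
        thus ?thesis using True fA[of _ 1] AB(5) unfolding c_def by (intro exI[of _ A] exI[of _ B]) auto
      next
        case False
        hence lt: "A < 1" using AB(3) by simp
        have "f A < f 1" using mono[OF lt] .
        hence "B * c < c" using AB(4)[of 1] unfolding c_def by simp
        hence B1: "B < 1" using c by simp
        have fA': "f ((1/A) ^ m) = (1/B) ^ m * c" for m :: nat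
        proof -
          have "f (A ^ m * (1/A) ^ m) = B ^ m * f ((1/A) ^ m)" by (rule fA)
          moreover have "A ^ m * (1/A) ^ m = 1" using AB(1) by (simp add: power_one_over)
          ultimately have "c = B ^ m * f ((1/A) ^ m)" unfolding c_def by simp
          thus ?thesis using AB(2) by (simp add: power_one_over)
        qed
        have "ln (1/B) / ln (1/A) = ln B / ln A" using AB(1,2) by (simp add: ln_div)
        moreover have "1/A > 1" "1/B > 1" using lt B1 AB(1,2) by simp_all
        ultimately show ?thesis using fA' AB(5) by (intro exI[of _ "1/A"] exI[of _ "1/B"]) auto
      qed
    qed
    show ?thesis
    proof (cases "\<forall>r\<in>I. \<bar>p r\<bar> = 1")
      case True
      thus ?thesis using unit by (intro exI[of _ 0]) auto
    next
      case False
      then obtain r1 where r1: "r1 \<in> I" "\<bar>p r1\<bar> \<noteq> 1" by blast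
      define \<beta> where "\<beta> = ln \<bar>q r1\<bar> / ln \<bar>p r1\<bar>"
      obtain A1 B1 where AB1: "A1 > 1" "B1 > 1" "\<And>m::nat. f (A1 ^ m) = B1 ^ m * c"
        "ln B1 / ln A1 = \<beta>" using AB[OF r1] \<beta>_def by blast
      have "ln B1 > 0" "ln A1 > 0" using AB1(1,2) by simp_all
      hence bpos: "\<beta> > 0" using AB1(4) by (metis divide_pos_pos)
      have rat: "ln \<bar>q r\<bar> / ln \<bar>p r\<bar> = \<beta>" if r: "r \<in> I" "\<bar>p r\<bar> \<noteq> 1" for r
      proof -
        obtain A B where AB2: "A > 1" "B > 1" "\<And>m::nat. f (A ^ m) = B ^ m * c"
          "ln B / ln A = ln \<bar>q r\<bar> / ln \<bar>p r\<bar>" using AB[OF r] by blast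
        have "ln B / ln A \<le> ln B1 / ln A1"
          by (rule compare_AB[OF mono c AB2(1-3) AB1(1-3)])
        moreover have "ln B1 / ln A1 \<le> ln B / ln A"
          by (rule compare_AB[OF mono c AB1(1-3) AB2(1-3)])
        ultimately show ?thesis using AB2(4) AB1(4) by linarith
      qed
      show ?thesis
      proof (intro exI[of _ "\<beta> - 1"] conjI ballI)
        show "\<beta> - 1 > -1" using bpos by simp
        fix r assume r: "r \<in> I"
        show "q r = p r * \<bar>p r\<bar> powr (\<beta> - 1)"
        proof (cases "\<bar>p r\<bar> = 1")
          case True thus ?thesis using unit r by simp
        next
          case False
          have lnp: "ln \<bar>p r\<bar> \<noteq> 0" using False pnz r by simp
          have "ln \<bar>q r\<bar> = \<beta> * ln \<bar>p r\<bar>" using rat[OF r False] lnp by (simp add: field_simps)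
          have "\<bar>q r\<bar> = exp (ln \<bar>q r\<bar>)" using qnz r by simp
          also have "\<dots> = exp (\<beta> * ln \<bar>p r\<bar>)" using \<open>ln \<bar>q r\<bar> = \<beta> * ln \<bar>p r\<bar>\<close> by simp
          also have "\<dots> = \<bar>p r\<bar> powr \<beta>" using pnz r by (simp add: powr_def)
          also have "\<dots> = \<bar>p r\<bar> powr (1 + (\<beta> - 1))" by simp
          also have "\<dots> = \<bar>p r\<bar> powr 1 * \<bar>p r\<bar> powr (\<beta> - 1)" by (rule powr_add)
          also have "\<dots> = \<bar>p r\<bar> * \<bar>p r\<bar> powr (\<beta> - 1)" by simp
          finally have "q r = sgn (p r) * (\<bar>p r\<bar> * \<bar>p r\<bar> powr (\<beta> - 1))" using sgnq[OF r] by simp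
          thus ?thesis by (simp add: mult.assoc[symmetric] sgn_mult_abs)
        qed
      qed
    qed
  qed
qed

definition sp :: "real \<Rightarrow> real \<Rightarrow> real" where
  "sp s x = (if x \<le> 0 then - ((- x) powr s) else x powr s)"

lemma sp_eq: "sp s x = sgn x * \<bar>x\<bar> powr s"
  unfolding sp_def by (cases "x < 0") (auto simp: abs_if)

lemma sp_cont: assumes "s > 0" shows "continuous_on UNIV (sp s)"
proof -
  have "continuous_on UNIV (\<lambda>x. if x \<le> 0 then - ((- x) powr s) else x powr s)"
  proof (rule continuous_on_cases_le[where h="\<lambda>x. x"])
    show "continuous_on {x \<in> UNIV. x \<le> 0} (\<lambda>x. - ((- x) powr s))"
      using assms by (auto intro!: continuous_intros continuous_on_powr')
    show "continuous_on {x \<in> UNIV. 0 \<le> x} (\<lambda>x. x powr s)"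
      using assms by (auto intro!: continuous_intros continuous_on_powr')
  qed (auto intro: continuous_intros)
  thus ?thesis unfolding sp_def[abs_def] .
qed

lemma sp_inv: assumes "s > 0" shows "sp (1 / s) (sp s x) = x"
proof (cases "x = 0")
  case True thus ?thesis by (simp add: sp_eq)
next
  case False
  have pos: "\<bar>x\<bar> powr s > 0" using False by simp
  have "sp (1 / s) (sp s x) = sgn (sgn x * \<bar>x\<bar> powr s) * \<bar>sgn x * \<bar>x\<bar> powr s\<bar> powr (1 / s)"
    by (simp add: sp_eq)
  also have "\<dots> = sgn x * (\<bar>x\<bar> powr s) powr (1 / s)"
    using pos False by (simp add: sgn_mult abs_mult)
  also have "(\<bar>x\<bar> powr s) powr (1 / s) = \<bar>x\<bar>" using assms by (simp add: powr_powr)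
  finally show ?thesis by (simp add: sgn_mult_abs)
qed

lemma sp_mult: "sp s (p * x) = sgn p * \<bar>p\<bar> powr s * sp s x"
  by (simp add: sp_eq sgn_mult abs_mult powr_mult)

lemma backward:
  fixes I :: "'i set" and p q :: "'i \<Rightarrow> real" and \<alpha> :: real
  assumes "\<alpha> > -1" "\<forall>r\<in>I. q r = p r * \<bar>p r\<bar> powr \<alpha>"
  shows "\<exists>f g. homeomorphism (UNIV::real set) (UNIV::real set) f g \<and>
            (\<forall>r\<in>I. \<forall>x. f (p r * x) = q r * f x)"
proof (intro exI conjI)
  define s where "s = \<alpha> + 1"
  have s: "s > 0" using assms(1) s_def by simp
  show "homeomorphism (UNIV::real set) UNIV (sp s) (sp (1/s))"
  proof (rule homeomorphismI)
    show "continuous_on UNIV (sp s)" by (rule sp_cont[OF s])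
    show "continuous_on UNIV (sp (1/s))" by (rule sp_cont) (use s in simp)
    show "sp (1 / s) (sp s x) = x" for x by (rule sp_inv[OF s])
    have "sp (1 / (1 / s)) (sp (1/s) y) = y" for y by (rule sp_inv) (use s in simp)
    thus "sp s (sp (1/s) y) = y" for y by simp
  qed auto
  show "\<forall>r\<in>I. \<forall>x. sp s (p r * x) = q r * sp s x"
  proof (intro ballI allI)
    fix r x assume r: "r \<in> I"
    have "\<bar>p r\<bar> powr s = \<bar>p r\<bar> powr 1 * \<bar>p r\<bar> powr \<alpha>" unfolding s_def
      by (simp add: powr_add add.commute)
    hence "sgn (p r) * \<bar>p r\<bar> powr s = p r * \<bar>p r\<bar> powr \<alpha>"
      by (simp add: mult.assoc[symmetric] sgn_mult_abs)
    thus "sp s (p r * x) = q r * sp s x" using assms(2) r by (simp add: sp_mult)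
  qed
qed

theorem theorem9p1:
  fixes I :: "'i set" and p q :: "'i \<Rightarrow> real"
  assumes "\<forall>r\<in>I. p r \<noteq> 0" and "\<forall>r\<in>I. q r \<noteq> 0"
  shows "(\<exists>f g. homeomorphism (UNIV::real set) (UNIV::real set) f g \<and>
            (\<forall>r\<in>I. \<forall>x. f (p r * x) = q r * f x))
         \<longleftrightarrow> (\<exists>\<alpha>::real. \<alpha> > -1 \<and> (\<forall>r\<in>I. q r = p r * \<bar>p r\<bar> powr \<alpha>))"
proof
  assume "\<exists>f g. homeomorphism (UNIV::real set) (UNIV::real set) f g \<and>
            (\<forall>r\<in>I. \<forall>x. f (p r * x) = q r * f x)"
  then obtain f g where h: "homeomorphism (UNIV::real set) (UNIV::real set) f g"
    and eq: "\<forall>r\<in>I. \<forall>x. f (p r * x) = q r * f x" by blast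
  have cont: "continuous_on UNIV f" using h by (simp add: homeomorphism_def)
  have "inj_on f UNIV" using h unfolding homeomorphism_def by (metis UNIV_I inj_on_inverseI)
  hence "strict_mono_on UNIV f \<or> strict_antimono_on UNIV f"
    using injective_eq_monotone_map[OF is_interval_univ cont] by blast
  thus "\<exists>\<alpha>::real. \<alpha> > -1 \<and> (\<forall>r\<in>I. q r = p r * \<bar>p r\<bar> powr \<alpha>)"
  proof
    assume sm: "strict_mono_on UNIV f"
    show ?thesis
    proof (rule core[OF _ eq assms])
      fix x y :: real assume "x < y" thus "f x < f y" using sm by (simp add: monotone_on_def)
    qed
  next
    assume sm: "strict_antimono_on UNIV f"
    show ?thesis
    proof (rule core[of "\<lambda>x. - f x"])
      fix x y :: real assume "x < y" thus "- f x < - f y" using sm by (simp add: monotone_on_def)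
    next
      show "\<forall>r\<in>I. \<forall>x. - f (p r * x) = q r * - f x" using eq by simp
    qed (use assms in auto)
  qed
next
  assume "\<exists>\<alpha>::real. \<alpha> > -1 \<and> (\<forall>r\<in>I. q r = p r * \<bar>p r\<bar> powr \<alpha>)"
  then obtain \<alpha> :: real where "\<alpha> > -1" "\<forall>r\<in>I. q r = p r * \<bar>p r\<bar> powr \<alpha>" by blast
  thus "\<exists>f g. homeomorphism (UNIV::real set) (UNIV::real set) f g \<and>
            (\<forall>r\<in>I. \<forall>x. f (p r * x) = q r * f x)" by (rule backward)
qed

end
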